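(* Let $\lambda\in(0,1)$ and $\omega\in(0,1]$ be fixed with $\omega\le (1-\lambda)/\lambda$. The capacity of the symmetric network coding channel $\mathrm{SNC}(\lambda,\omega)$ is $$C(\lambda,\omega)=1-\lambda-\omega+\lambda\omega^2 .$$
   Context: Fix a prime power $q$ and the finite field $\mathbb{F}_q$. For an integer $N$ let $\ell=\lambda N$ and $m=N-\ell$ (considered along values of $N$ for which $\ell$ and $\ell\omega$ are integers). The symmetric network coding channel $\mathrm{SNC}(\lambda,\omega)$ has as input an $\ell\times m$ matrix $\underline{x}$ over $\mathbb{F}_q$ and as output $\underline{y}=\underline{x}+\underline{z}$, where $\underline{z}$ is chosen, independently of $\underline{x}$, uniformly at random among all $\ell\times m$ matrices over $\mathbb{F}_q$ of rank exactly $\ell\omega$. Its capacity is defined as $$C(\lambda,\omega)=\lim_{N\to\infty,\ \ell=\lambda N}\frac{1}{N\ell}\sup_{P_{\underline{X}}} I(\underline{X};\underline{Y}),$$ where the supremum is over input distributions, $I$ is mutual information measured in base-$q$ logarithms, and $\underline{Y}$ is the channel output for input $\underline{X}$. *)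

theory Defs
  imports "HOL-Analysis.Analysis" "Jordan_Normal_Form.DL_Rank"
begin

definition SNC_inputs :: "nat \<Rightarrow> nat \<Rightarrow> 'a::{finite,field} mat set" where
  "SNC_inputs l m = carrier_mat l m"

definition SNC_noise :: "nat \<Rightarrow> nat \<Rightarrow> nat \<Rightarrow> 'a::{finite,field} mat set" where
  "SNC_noise l m r = {Z \<in> carrier_mat l m. vec_space.rank l Z = r}"

text \<open>Transition probability W(y|x): Z uniform on the rank-r matrices, Y = X + Z.\<close>
definition SNC_W :: "nat \<Rightarrow> nat \<Rightarrow> nat \<Rightarrow> 'a::{finite,field} mat \<Rightarrow> 'a mat \<Rightarrow> real" where
  "SNC_W l m r x y =
     (if y - x \<in> SNC_noise l m r then 1 / real (card (SNC_noise l m r :: 'a mat set)) else 0)"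

definition SNC_input_dists :: "nat \<Rightarrow> nat \<Rightarrow> ('a::{finite,field} mat \<Rightarrow> real) set" where
  "SNC_input_dists l m = {P. (\<forall>x. P x \<ge> 0) \<and> (\<forall>x. x \<notin> SNC_inputs l m \<longrightarrow> P x = 0)
                             \<and> (\<Sum>x\<in>SNC_inputs l m. P x) = 1}"

definition SNC_out :: "nat \<Rightarrow> nat \<Rightarrow> nat \<Rightarrow> ('a::{finite,field} mat \<Rightarrow> real) \<Rightarrow> 'a mat \<Rightarrow> real" where
  "SNC_out l m r P y = (\<Sum>x\<in>SNC_inputs l m. P x * SNC_W l m r x y)"

definition SNC_MI :: "nat \<Rightarrow> nat \<Rightarrow> nat \<Rightarrow> ('a::{finite,field} mat \<Rightarrow> real) \<Rightarrow> real" where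
  "SNC_MI l m r P =
     (\<Sum>x\<in>SNC_inputs l m. \<Sum>y\<in>SNC_inputs l m.
        (if P x * SNC_W l m r x y = 0 then 0
         else P x * SNC_W l m r x y
              * log (real CARD('a)) (SNC_W l m r x y / SNC_out l m r P y)))"

definition SNC_lengths :: "real \<Rightarrow> real \<Rightarrow> nat set" where
  "SNC_lengths lam om = {N. \<exists>l k :: nat. real l = lam * real N \<and> real k = real l * om}"

text \<open>Normalized capacity at block length N: (1/(N l)) sup_P I(X;Y), with
  l = lambda N, m = N - l, r = l omega (exact integers for N in SNC_lengths).\<close>
definition SNC_cap_N :: "'a::{finite,field} itself \<Rightarrow> real \<Rightarrow> real \<Rightarrow> nat \<Rightarrow> real" where
  "SNC_cap_N _ lam om N =
     (let l = nat \<lfloor>lam * real N\<rfloor>; m = N - l; r = nat \<lfloor>real l * om\<rfloor> in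
      (1 / (real N * real l)) * (SUP P \<in> (SNC_input_dists l m :: ('a mat \<Rightarrow> real) set). SNC_MI l m r P))"

end

theory Submission
  imports Defs
begin


lemma card_field_ge2: "CARD('a::{finite,field}) \<ge> 2"
proof -
  have "card {0::'a, 1} = 2" by simp
  moreover have "card {0::'a, 1} \<le> CARD('a)" by (rule card_mono) auto
  ultimately show ?thesis by simp
qed

lemma bij_carrier_vec:
  "bij_betw (\<lambda>v. restrict (\<lambda>i. v $ i) {..<n}) (carrier_vec n :: 'a vec set) ({..<n} \<rightarrow>\<^sub>E (UNIV::'a set))"
proof (rule bij_betwI[where g="\<lambda>f. vec n f"])
  show "(\<lambda>v. restrict (($) v) {..<n}) \<in> carrier_vec n \<rightarrow> {..<n} \<rightarrow>\<^sub>E UNIV" by auto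
  show "(\<lambda>f. vec n f) \<in> ({..<n} \<rightarrow>\<^sub>E (UNIV::'a set)) \<rightarrow> carrier_vec n" by auto
  show "vec n (restrict (($) x) {..<n}) = x" if "x \<in> carrier_vec n" for x :: "'a vec"
    using that by (intro eq_vecI) auto
  show "restrict (($) (vec n y)) {..<n} = y" if "y \<in> {..<n} \<rightarrow>\<^sub>E (UNIV::'a set)" for y
    using that by (auto simp: fun_eq_iff PiE_def extensional_def)
qed

lemma crd_carrier_vec: "card (carrier_vec n :: 'a::finite vec set) = CARD('a) ^ n"
  using bij_betw_same_card[OF bij_carrier_vec[of n]] by (simp add: card_PiE)

lemma fin_carrier_vec: "finite (carrier_vec n :: 'a::finite vec set)"
  using bij_betw_finite[OF bij_carrier_vec[of n]] by (auto intro!: finite_PiE)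

lemma bij_carrier_mat:
  "bij_betw (\<lambda>A. restrict (\<lambda>(i,j). A $$ (i,j)) ({..<l} \<times> {..<m})) (carrier_mat l m :: 'a mat set)
     ({..<l} \<times> {..<m} \<rightarrow>\<^sub>E (UNIV::'a set))"
proof (rule bij_betwI[where g="\<lambda>f. mat l m f"])
  show "(\<lambda>A. restrict (\<lambda>(i,j). A $$ (i,j)) ({..<l} \<times> {..<m})) \<in> carrier_mat l m \<rightarrow> {..<l} \<times> {..<m} \<rightarrow>\<^sub>E UNIV" by auto
  show "(\<lambda>f. mat l m f) \<in> ({..<l} \<times> {..<m} \<rightarrow>\<^sub>E (UNIV::'a set)) \<rightarrow> carrier_mat l m" by auto
  show "mat l m (restrict (\<lambda>(i,j). x $$ (i,j)) ({..<l} \<times> {..<m})) = x" if "x \<in> carrier_mat l m" for x :: "'a mat"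
    using that by (intro eq_matI) auto
  show "restrict (\<lambda>(i,j). mat l m y $$ (i,j)) ({..<l} \<times> {..<m}) = y" if "y \<in> {..<l} \<times> {..<m} \<rightarrow>\<^sub>E (UNIV::'a set)" for y
    using that by (auto simp: fun_eq_iff PiE_def extensional_def)
qed

lemma crd_carrier_mat: "card (carrier_mat l m :: 'a::finite mat set) = CARD('a) ^ (l*m)"
  using bij_betw_same_card[OF bij_carrier_mat[of l m]] by (simp add: card_PiE)

lemma fin_carrier_mat: "finite (carrier_mat l m :: 'a::finite mat set)"
  using bij_betw_finite[OF bij_carrier_mat[of l m]] by (auto intro!: finite_PiE)

lemma gibbs:
  fixes f :: "'b \<Rightarrow> real" and b :: real
  assumes fin: "finite Y" and nn: "\<And>y. y \<in> Y \<Longrightarrow> f y \<ge> 0" and s1: "sum f Y = 1" and b: "b > 1"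
  shows "(\<Sum>y\<in>Y. if f y = 0 then 0 else - f y * log b (f y)) \<le> log b (card Y)"
proof -
  have "Y \<noteq> {}" using s1 by auto
  hence npos: "real (card Y) > 0" using fin by (simp add: card_gt_0_iff)
  define n where "n = real (card Y)"
  have lnb: "ln b > 0" using b by simp
  have each: "(if f y = 0 then 0 else - f y * log b (f y)) \<le> f y * log b n + (1/n - f y) / ln b"
    if y: "y \<in> Y" for y
  proof (cases "f y = 0")
    case True thus ?thesis using npos lnb n_def by simp
  next
    case False
    hence fp: "f y > 0" using nn[OF y] by simp
    define t where "t = 1 / (n * f y)"
    have tp: "t > 0" using fp npos n_def t_def by simp
    have "ln t \<le> t - 1" using tp by (rule ln_le_minus_one)
    hence "f y * ln t \<le> f y * (t - 1)" using fp by (simp add: mult_left_mono)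
    also have "f y * (t - 1) = 1/n - f y" using fp npos n_def t_def by (simp add: field_simps)
    finally have A: "f y * ln t \<le> 1/n - f y" .
    have L: "ln t = - ln n - ln (f y)" using fp npos n_def t_def by (simp add: ln_div ln_mult)
    have "- f y * log b (f y) - f y * log b n = f y * ln t / ln b"
      unfolding log_def L using lnb by (simp add: field_simps)
    also have "\<dots> \<le> (1/n - f y) / ln b" using A lnb by (simp add: divide_right_mono)
    finally show ?thesis using False by simp
  qed
  have "(\<Sum>y\<in>Y. if f y = 0 then 0 else - f y * log b (f y)) \<le> (\<Sum>y\<in>Y. f y * log b n + (1/n - f y) / ln b)"
    by (rule sum_mono) (use each in auto)
  also have "\<dots> = log b n * sum f Y + (card Y * (1/n) - sum f Y) / ln b"
    by (simp add: sum.distrib sum_distrib_right sum_divide_distrib[symmetric] sum_subtractf mult.commute)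
  also have "\<dots> = log b n" using s1 npos n_def by simp
  finally show ?thesis using n_def by simp
qed




lemma trans_card1:
  fixes x :: "'a::{finite,field} mat" and Nz :: "'a mat set"
  assumes x: "x \<in> carrier_mat l m" and Nz: "Nz \<subseteq> carrier_mat l m"
  shows "card {y \<in> carrier_mat l m. y - x \<in> Nz} = card Nz"
proof -
  have "{y \<in> carrier_mat l m. y - x \<in> Nz} = (\<lambda>z. z + x) ` Nz"
  proof (rule equalityI; rule subsetI)
    fix y assume "y \<in> {y \<in> carrier_mat l m. y - x \<in> Nz}"
    hence y: "y \<in> carrier_mat l m" "y - x \<in> Nz" by auto
    have "y = (y - x) + x" using x y(1) by (intro eq_matI) auto
    thus "y \<in> (\<lambda>z. z + x) ` Nz" using y(2) by blast
  next
    fix y assume "y \<in> (\<lambda>z. z + x) ` Nz"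
    then obtain z where z: "z \<in> Nz" "y = z + x" by blast
    have zc: "z \<in> carrier_mat l m" using z Nz by auto
    have "y - x = z" using z(2) zc x by (intro eq_matI) auto
    thus "y \<in> {y \<in> carrier_mat l m. y - x \<in> Nz}" using z zc x by auto
  qed
  moreover have "inj_on (\<lambda>z. z + x) Nz"
  proof (rule inj_onI)
    fix a b assume ab: "a \<in> Nz" "b \<in> Nz" "a + x = b + x"
    hence ac: "a \<in> carrier_mat l m" "b \<in> carrier_mat l m" using Nz by auto
    show "a = b"
    proof (rule eq_matI)
      fix i j assume ij: "i < dim_row b" "j < dim_col b"
      have "(a + x) $$ (i,j) = (b + x) $$ (i,j)" using ab by simp
      thus "a $$ (i,j) = b $$ (i,j)" using ij ac x by simp
    qed (use ac in auto)
  qed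
  ultimately show ?thesis by (simp add: card_image)
qed

lemma trans_card2:
  fixes y :: "'a::{finite,field} mat" and Nz :: "'a mat set"
  assumes y: "y \<in> carrier_mat l m" and Nz: "Nz \<subseteq> carrier_mat l m"
  shows "card {x \<in> carrier_mat l m. y - x \<in> Nz} = card Nz"
proof -
  have "{x \<in> carrier_mat l m. y - x \<in> Nz} = (\<lambda>z. y - z) ` Nz"
  proof (rule equalityI; rule subsetI)
    fix x assume "x \<in> {x \<in> carrier_mat l m. y - x \<in> Nz}"
    hence x: "x \<in> carrier_mat l m" "y - x \<in> Nz" by auto
    have "x = y - (y - x)" using x y by (intro eq_matI) auto
    thus "x \<in> (\<lambda>z. y - z) ` Nz" using x(2) by blast
  next
    fix x assume "x \<in> (\<lambda>z. y - z) ` Nz"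
    then obtain z where z: "z \<in> Nz" "x = y - z" by blast
    have zc: "z \<in> carrier_mat l m" using z Nz by auto
    have "y - x = z" using z(2) zc y by (intro eq_matI) auto
    thus "x \<in> {x \<in> carrier_mat l m. y - x \<in> Nz}" using z zc y by auto
  qed
  moreover have "inj_on (\<lambda>z. y - z) Nz"
  proof (rule inj_onI)
    fix a b assume ab: "a \<in> Nz" "b \<in> Nz" "y - a = y - b"
    hence ac: "a \<in> carrier_mat l m" "b \<in> carrier_mat l m" using Nz by auto
    show "a = b"
    proof (rule eq_matI)
      fix i j assume ij: "i < dim_row b" "j < dim_col b"
      have "(y - a) $$ (i,j) = (y - b) $$ (i,j)" using ab by simp
      thus "a $$ (i,j) = b $$ (i,j)" using ij ac y by simp
    qed (use ac in auto)
  qed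
  ultimately show ?thesis by (simp add: card_image)
qed

lemma sum_if_const: "finite A \<Longrightarrow> (\<Sum>y\<in>A. if P y then c else 0) = real (card {y\<in>A. P y}) * (c::real)"
  by (simp add: sum.inter_filter[symmetric])

lemma MI_decomp:
  fixes P :: "'a::{finite,field} mat \<Rightarrow> real"
  assumes K: "card (SNC_noise l m r :: 'a mat set) > 0" and P: "P \<in> SNC_input_dists l m"
  shows "SNC_MI l m r P = - log (real CARD('a)) (card (SNC_noise l m r :: 'a mat set))
     + (\<Sum>y\<in>carrier_mat l m. if SNC_out l m r P y = 0 then 0
          else - SNC_out l m r P y * log (real CARD('a)) (SNC_out l m r P y))"
    and "SNC_out l m r P y \<ge> 0"
    and "(\<Sum>y\<in>carrier_mat l m. SNC_out l m r P y) = 1"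
proof -
  define X where "X = (carrier_mat l m :: 'a mat set)"
  define Nz where "Nz = (SNC_noise l m r :: 'a mat set)"
  define K where "K = real (card Nz)"
  define q where "q = real CARD('a)"
  define W where "W = (SNC_W l m r :: 'a mat \<Rightarrow> 'a mat \<Rightarrow> real)"
  define out where "out = SNC_out l m r P"
  have finX: "finite X" unfolding X_def by (rule fin_carrier_mat)
  have NzX: "Nz \<subseteq> X" unfolding Nz_def X_def SNC_noise_def by auto
  have Kp: "K > 0" using assms K_def Nz_def by simp
  have Wd: "W x y = (if y - x \<in> Nz then 1/K else 0)" for x y
    unfolding W_def SNC_W_def Nz_def K_def by simp
  have Wnn: "W x y \<ge> 0" for x y using Kp Wd by simp
  have Pnn: "P x \<ge> 0" for x using P unfolding SNC_input_dists_def by auto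
  have P1: "sum P X = 1" using P unfolding SNC_input_dists_def SNC_inputs_def X_def by auto
  have outd: "out y = (\<Sum>x\<in>X. P x * W x y)" for y
    unfolding out_def SNC_out_def SNC_inputs_def X_def W_def by simp
  have sumW: "(\<Sum>y\<in>X. W x y) = 1" if "x \<in> X" for x
  proof -
    have "(\<Sum>y\<in>X. W x y) = real (card {y\<in>X. y - x \<in> Nz}) * (1/K)"
      unfolding Wd by (rule sum_if_const[OF finX])
    also have "card {y\<in>X. y - x \<in> Nz} = card Nz"
      using trans_card1[of x l m Nz] that NzX unfolding X_def by auto
    finally show ?thesis using Kp K_def by simp
  qed
  have outnn: "out y \<ge> 0" for y unfolding outd by (intro sum_nonneg mult_nonneg_nonneg Pnn Wnn)
  show "SNC_out l m r P y \<ge> 0" using outnn[of y] by (simp add: out_def)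
  have out1: "(\<Sum>y\<in>X. out y) = 1"
  proof -
    have "(\<Sum>y\<in>X. out y) = (\<Sum>y\<in>X. \<Sum>x\<in>X. P x * W x y)" unfolding outd ..
    also have "\<dots> = (\<Sum>x\<in>X. \<Sum>y\<in>X. P x * W x y)" by (rule sum.swap)
    also have "\<dots> = (\<Sum>x\<in>X. P x * (\<Sum>y\<in>X. W x y))" by (simp add: sum_distrib_left)
    also have "\<dots> = (\<Sum>x\<in>X. P x)" using sumW by simp
    finally show ?thesis using P1 by simp
  qed
  show "(\<Sum>y\<in>carrier_mat l m. SNC_out l m r P y) = 1" using out1 by (simp add: out_def X_def)
  define Lg where "Lg y = (if out y = 0 then 0 else - log q (out y))" for y
  have trm: "(if P x * W x y = 0 then 0 else P x * W x y * log q (W x y / out y))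
      = P x * W x y * (- log q K) + P x * W x y * Lg y" if xX: "x \<in> X" for x y
  proof (cases "P x * W x y = 0")
    case True thus ?thesis by simp
  next
    case False
    hence W1: "W x y = 1/K" using Wd by (auto split: if_splits)
    have pos: "P x * W x y > 0" using False Pnn Wnn by (simp add: less_le)
    have "P x * W x y \<le> out y" unfolding outd
      by (rule member_le_sum[OF xX]) (auto intro: mult_nonneg_nonneg Pnn Wnn finX simp: finX)
    hence op: "out y > 0" using pos by simp
    have e1: "log q (W x y / out y) = log q (W x y) - log q (out y)"
      using op pos Pnn by (subst log_divide) (auto simp: W1 Kp)
    have e2: "log q (W x y) = - log q K" using Kp by (simp add: W1 log_divide)
    have LL: "log q (W x y / out y) = - log q K + Lg y" using e1 e2 op by (simp add: Lg_def)
    show ?thesis using False by (simp add: LL algebra_simps)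
  qed
  have "SNC_MI l m r P = (\<Sum>x\<in>X. \<Sum>y\<in>X. P x * W x y * (- log q K) + P x * W x y * Lg y)"
    unfolding SNC_MI_def SNC_inputs_def X_def[symmetric] q_def[symmetric] W_def[symmetric]
      out_def[symmetric]
    by (intro sum.cong refl) (use trm in auto)
  also have "\<dots> = (\<Sum>x\<in>X. \<Sum>y\<in>X. P x * W x y * (- log q K)) + (\<Sum>x\<in>X. \<Sum>y\<in>X. P x * W x y * Lg y)"
    by (simp only: sum.distrib)
  also have "(\<Sum>x\<in>X. \<Sum>y\<in>X. P x * W x y * (- log q K)) = (- log q K) * (\<Sum>x\<in>X. P x * (\<Sum>y\<in>X. W x y))"
    by (simp add: sum_distrib_left sum_distrib_right mult.commute mult.left_commute)
  also have "(\<Sum>x\<in>X. \<Sum>y\<in>X. P x * W x y * Lg y) = (\<Sum>y\<in>X. \<Sum>x\<in>X. P x * W x y * Lg y)"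
    by (rule sum.swap)
  also have "\<dots> = (\<Sum>y\<in>X. Lg y * out y)"
    unfolding outd by (simp add: sum_distrib_left sum_distrib_right mult.commute)
  also have "(\<Sum>x\<in>X. P x * (\<Sum>y\<in>X. W x y)) = 1" using sumW P1 by simp
  also have "(\<Sum>y\<in>X. Lg y * out y) = (\<Sum>y\<in>X. if out y = 0 then 0 else - out y * log q (out y))"
    by (intro sum.cong refl) (simp add: Lg_def)
  finally show "SNC_MI l m r P = - log (real CARD('a)) (card (SNC_noise l m r :: 'a mat set))
     + (\<Sum>y\<in>carrier_mat l m. if SNC_out l m r P y = 0 then 0
          else - SNC_out l m r P y * log (real CARD('a)) (SNC_out l m r P y))"
    unfolding q_def K_def Nz_def out_def X_def by simp
qed

lemma SUP_MI:
  assumes K: "card (SNC_noise l m r :: 'a::{finite,field} mat set) > 0"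
  shows "(SUP P \<in> (SNC_input_dists l m :: ('a mat \<Rightarrow> real) set). SNC_MI l m r P)
       = real (l*m) - log (real CARD('a)) (card (SNC_noise l m r :: 'a mat set))"
proof -
  define X where "X = (carrier_mat l m :: 'a mat set)"
  define n where "n = real (card X)"
  define q where "q = real CARD('a)"
  define c where "c = real (l*m) - log q (card (SNC_noise l m r :: 'a mat set))"
  have q1: "q > 1" using card_field_ge2[where 'a='a] q_def by simp
  have finX: "finite X" unfolding X_def by (rule fin_carrier_mat)
  have nq: "n = q ^ (l*m)" unfolding n_def X_def q_def by (simp add: crd_carrier_mat)
  have logn: "log q n = real (l*m)" using q1 nq by simp
  have npos: "n > 0" using q1 nq by simp
  have up: "SNC_MI l m r P \<le> c" if P: "P \<in> SNC_input_dists l m" for P :: "'a mat \<Rightarrow> real"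
  proof -
    note D = MI_decomp[OF K P]
    have "(\<Sum>y\<in>X. if SNC_out l m r P y = 0 then 0
          else - SNC_out l m r P y * log q (SNC_out l m r P y)) \<le> log q (card X)"
      by (rule gibbs[OF finX]) (use D(2) D(3) q1 in \<open>auto simp: X_def\<close>)
    thus ?thesis using D(1) logn unfolding c_def q_def X_def n_def by simp
  qed
  define P0 where "P0 x = (if x \<in> X then 1/n else 0)" for x :: "'a mat"
  have P0: "P0 \<in> SNC_input_dists l m"
    unfolding SNC_input_dists_def SNC_inputs_def X_def[symmetric] P0_def
    using npos finX n_def by auto
  have out0: "SNC_out l m r P0 y = 1/n" if y: "y \<in> X" for y
  proof -
    have Kp: "card (SNC_noise l m r :: 'a mat set) > 0" by fact
    have "SNC_out l m r P0 y = (\<Sum>x\<in>X. if y - x \<in> SNC_noise l m r then 1/n * (1/card (SNC_noise l m r :: 'a mat set)) else 0)"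
      unfolding SNC_out_def SNC_inputs_def X_def[symmetric] SNC_W_def P0_def
      by (intro sum.cong refl) auto
    also have "\<dots> = real (card {x\<in>X. y - x \<in> SNC_noise l m r}) * (1/n * (1/card (SNC_noise l m r :: 'a mat set)))"
      by (rule sum_if_const[OF finX])
    also have "card {x\<in>X. y - x \<in> SNC_noise l m r} = card (SNC_noise l m r :: 'a mat set)"
      using trans_card2[of y l m "SNC_noise l m r"] y unfolding X_def SNC_noise_def by auto
    finally show ?thesis using Kp by simp
  qed
  have "SNC_MI l m r P0 = c"
  proof -
    note D = MI_decomp[OF K P0]
    have "(\<Sum>y\<in>X. if SNC_out l m r P0 y = 0 then 0
          else - SNC_out l m r P0 y * log q (SNC_out l m r P0 y)) = (\<Sum>y\<in>X. - (1/n) * log q (1/n))"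
      using npos by (intro sum.cong refl) (simp add: out0)
    also have "\<dots> = log q n" using npos q1 n_def by (simp add: log_divide)
    finally show ?thesis using D(1) logn unfolding c_def q_def X_def n_def by simp
  qed
  hence "(SUP P \<in> (SNC_input_dists l m :: ('a mat \<Rightarrow> real) set). SNC_MI l m r P) = c"
    using P0 up by (intro cSup_eq_maximum) auto
  thus ?thesis unfolding c_def q_def .
qed




locale fvec_space = vec_space f_ty n for f_ty :: "'a::{finite,field} itself" and n :: nat
begin

lemma span_eq_image:
  assumes fin: "finite A" and A: "A \<subseteq> carrier_vec n"
  shows "span A = (\<lambda>a. lincomb a A) ` (A \<rightarrow>\<^sub>E UNIV)"
proof (rule equalityI; rule subsetI)
  fix v assume "v \<in> span A"
  then obtain a where a: "a \<in> A \<rightarrow> UNIV" "lincomb a A = v"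
    using finite_in_span[OF fin _] A by fastforce
  have "lincomb (restrict a A) A = lincomb a A"
    by (rule lincomb_restrict[OF A]) auto
  hence "v = lincomb (restrict a A) A" using a(2) by simp
  moreover have "restrict a A \<in> A \<rightarrow>\<^sub>E UNIV" by simp
  ultimately show "v \<in> (\<lambda>a. lincomb a A) ` (A \<rightarrow>\<^sub>E UNIV)" by (rule image_eqI)
next
  fix v assume "v \<in> (\<lambda>a. lincomb a A) ` (A \<rightarrow>\<^sub>E UNIV)"
  then obtain a where "v = lincomb a A" by blast
  thus "v \<in> span A" using finite_span[OF fin] A by auto
qed

lemma card_span:
  assumes fin: "finite A" and A: "A \<subseteq> carrier_vec n"
  shows "card (span A) \<le> CARD('a) ^ card A" and "finite (span A)"
proof -
  have f: "finite (A \<rightarrow>\<^sub>E (UNIV::'a set))" using fin by (auto intro!: finite_PiE)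
  show "card (span A) \<le> CARD('a) ^ card A"
    unfolding span_eq_image[OF fin A]
    using card_image_le[OF f, of "\<lambda>a. lincomb a A"] by (simp add: card_PiE fin)
  show "finite (span A)" unfolding span_eq_image[OF fin A] using f by simp
qed

definition IL :: "nat \<Rightarrow> 'a vec list set" where
  "IL k = {xs. length xs = k \<and> set xs \<subseteq> carrier_vec n \<and> distinct xs \<and> lin_indpt (set xs)}"

lemma finite_IL: "finite (IL k)"
proof -
  have "IL k \<subseteq> {xs. set xs \<subseteq> carrier_vec n \<and> length xs = k}" unfolding IL_def by auto
  moreover have "finite {xs. set xs \<subseteq> (carrier_vec n :: 'a vec set) \<and> length xs = k}"
    by (rule finite_lists_length_eq) (rule fin_carrier_vec)
  ultimately show ?thesis by (rule finite_subset)
qed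

lemma IL_0: "IL 0 = {[]}"
  unfolding IL_def lin_dep_def by auto

lemma IL_step: "card (IL (Suc k)) \<ge> card (IL k) * (CARD('a) ^ n - CARD('a) ^ k)"
proof -
  define S where "S = Sigma (IL k) (\<lambda>xs. carrier_vec n - span (set xs))"
  have spanC: "span (set xs) \<subseteq> carrier_vec n" if "xs \<in> IL k" for xs
    using that unfolding IL_def by (auto intro: span_is_subset2)
  have cardS: "card S \<ge> card (IL k) * (CARD('a) ^ n - CARD('a) ^ k)"
  proof -
    have "card S = (\<Sum>xs\<in>IL k. card (carrier_vec n - span (set xs)))"
      unfolding S_def by (rule card_SigmaI) (auto simp: finite_IL fin_carrier_vec)
    also have "\<dots> \<ge> (\<Sum>xs\<in>IL k. CARD('a) ^ n - CARD('a) ^ k)"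
    proof (rule sum_mono)
      fix xs assume xs: "xs \<in> IL k"
      have sv: "set xs \<subseteq> carrier_vec n" "card (set xs) = k" using xs unfolding IL_def
        by (auto simp: distinct_card)
      have "card (span (set xs)) \<le> CARD('a) ^ k" using card_span[OF _ sv(1)] sv(2) by simp
      moreover have "card (carrier_vec n - span (set xs)) = CARD('a) ^ n - card (span (set xs))"
        using spanC[OF xs] card_span(2)[OF _ sv(1)]
        by (simp add: card_Diff_subset crd_carrier_vec)
      ultimately show "CARD('a) ^ n - CARD('a) ^ k \<le> card (carrier_vec n - span (set xs))" by simp
    qed
    finally show ?thesis by simp
  qed
  have inj: "inj_on (\<lambda>(xs, v). xs @ [v]) S"
    by (rule inj_onI) (auto simp: S_def IL_def)
  have img: "(\<lambda>(xs, v). xs @ [v]) ` S \<subseteq> IL (Suc k)"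
  proof (rule subsetI)
    fix w assume "w \<in> (\<lambda>(xs, v). xs @ [v]) ` S"
    then obtain xs v where w: "w = xs @ [v]" and xs: "xs \<in> IL k" and v: "v \<in> carrier_vec n" "v \<notin> span (set xs)"
      unfolding S_def by auto
    have sv: "set xs \<subseteq> carrier_vec n" "lin_indpt (set xs)" "distinct xs" "length xs = k"
      using xs unfolding IL_def by auto
    have vn: "v \<notin> set xs" using v(2) in_own_span[OF sv(1)] by auto
    have "lin_indpt (set xs \<union> {v})"
      using lin_dep_iff_in_span[OF sv(1) sv(2) v(1) vn] v(2) by simp
    moreover have "set w = set xs \<union> {v}" using w by auto
    ultimately show "w \<in> IL (Suc k)" unfolding IL_def using w sv vn v by auto
  qed
  have "card S \<le> card (IL (Suc k))"
    using card_inj_on_le[OF inj img finite_IL] .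
  thus ?thesis using cardS by simp
qed

lemma IL_lower: "k \<le> n \<Longrightarrow> real (card (IL k)) \<ge> (real CARD('a) ^ n / 2) ^ k"
proof (induction k)
  case 0 thus ?case by (simp add: IL_0)
next
  case (Suc k)
  define q where "q = CARD('a)"
  have q2: "q \<ge> 2" unfolding q_def by (rule card_field_ge2)
  have kn: "k < n" using Suc by simp
  have "q ^ k \<le> q ^ (n - 1)" using q2 kn by (intro power_increasing) auto
  moreover have "2 * q ^ (n - 1) \<le> q ^ n"
  proof -
    have "q ^ n = q * q ^ (n-1)" using kn by (cases n) auto
    moreover have "2 * q ^ (n - 1) \<le> q * q ^ (n-1)" using q2 by (rule mult_right_mono) simp
    ultimately show ?thesis by simp
  qed
  ultimately have A: "2 * q ^ k \<le> q ^ n" by simp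
  have A1: "real (2 * q ^ k) \<le> real (q ^ n)" using A by (simp only: of_nat_le_iff)
  hence A2: "2 * real q ^ k \<le> real q ^ n" by simp
  have A3: "real (q ^ n - q ^ k) = real q ^ n - real q ^ k" using A by (simp add: of_nat_diff)
  have B: "real (q ^ n - q ^ k) \<ge> real q ^ n / 2" using A2 A3 by linarith
  have IH: "real (card (IL k)) \<ge> (real q ^ n / 2) ^ k" using Suc q_def kn by simp
  have "(real q ^ n / 2) ^ Suc k = (real q ^ n / 2) ^ k * (real q ^ n / 2)" by simp
  also have "\<dots> \<le> real (card (IL k)) * real (q ^ n - q ^ k)"
    by (intro mult_mono IH B) auto
  also have "\<dots> = real (card (IL k) * (q ^ n - q ^ k))" by simp
  also have "\<dots> \<le> real (card (IL (Suc k)))" using IL_step q_def by (simp only: of_nat_le_iff)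
  finally show ?case unfolding q_def .
qed

lemma set_cols_eq: "Z \<in> carrier_mat n m \<Longrightarrow> set (cols Z) = col Z ` {..<m}"
  by (auto simp: cols_def)

lemma rank_span_cols:
  assumes Z: "Z \<in> carrier_mat n m" and rk: "rank Z = r"
  shows "\<exists>J \<subseteq> {..<m}. card J = r \<and> inj_on (col Z) J \<and> (\<forall>j<m. col Z j \<in> span (col Z ` J))"
proof -
  obtain S where S: "maximal S (\<lambda>T. T \<subseteq> set (cols Z) \<and> lin_indpt T)"
    using maximal_exists[of "(\<lambda>T. T \<subseteq> set (cols Z) \<and> lin_indpt T)" "card (set (cols Z))" "{}"]
    by (meson List.finite_set card_mono empty_iff empty_subsetI finite_lin_indpt2 rev_finite_subset)
  have cS: "card S = r" using rank_card_indpt[OF Z S] rk by simp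
  have SC: "S \<subseteq> set (cols Z)" "lin_indpt S" using S unfolding maximal_def by auto
  have colsC: "set (cols Z) \<subseteq> carrier_vec n" using cols_dim[of Z] Z by simp
  have SC2: "S \<subseteq> carrier_vec n" using SC colsC by auto
  have setcols: "set (cols Z) = col Z ` {..<m}" using set_cols_eq[OF Z] .
  define g where "g s = (SOME j. j < m \<and> col Z j = s)" for s
  have g: "g s < m \<and> col Z (g s) = s" if "s \<in> S" for s
  proof -
    have "\<exists>j. j < m \<and> col Z j = s" using that SC(1) setcols by auto
    thus ?thesis unfolding g_def by (rule someI_ex)
  qed
  define J where "J = g ` S"
  have injg: "inj_on g S" by (rule inj_onI) (metis g)
  have cardJ: "card J = r" unfolding J_def using card_image[OF injg] cS by simp
  have colJ: "col Z ` J = S" unfolding J_def image_image using g by (auto simp: image_iff)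
  have injc: "inj_on (col Z) J" unfolding J_def by (rule inj_onI) (auto simp: g)
  have Jm: "J \<subseteq> {..<m}" unfolding J_def using g by auto
  have sp: "col Z j \<in> span S" if j: "j < m" for j
  proof (rule ccontr)
    assume ns: "col Z j \<notin> span S"
    have vC: "col Z j \<in> carrier_vec n" using j Z by simp
    have vS: "col Z j \<notin> S" using ns in_own_span[OF SC2] by auto
    have li: "lin_indpt (S \<union> {col Z j})"
      using lin_dep_iff_in_span[OF SC2 SC(2) vC vS] ns by simp
    have "S \<union> {col Z j} \<subseteq> set (cols Z)" using SC(1) setcols j by auto
    hence "S \<union> {col Z j} = S" using S li unfolding maximal_def by blast
    thus False using vS by auto
  qed
  show ?thesis using Jm cardJ injc sp colJ by auto
qed

lemma upper_count:
  "card {Z \<in> carrier_mat n m. rank Z = r} \<le> 2^m * (CARD('a)^(n*r) * (CARD('a)^r)^(m-r))"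
proof -
  define Js where "Js = {J. J \<subseteq> {..<m} \<and> card J = r}"
  define Dom where "Dom J = ({..<n} \<times> J \<rightarrow>\<^sub>E (UNIV::'a set)) \<times> (({..<m} - J) \<rightarrow>\<^sub>E (J \<rightarrow>\<^sub>E (UNIV::'a set)))" for J
  define Rec where "Rec J = (\<lambda>(a :: nat \<times> nat \<Rightarrow> 'a, c :: nat \<Rightarrow> nat \<Rightarrow> 'a).
       mat n m (\<lambda>(i,j). if j \<in> J then a (i,j) else (\<Sum>k\<in>J. c j k * a (i,k))))" for J :: "nat set"
  have sub: "{Z \<in> carrier_mat n m. rank Z = r} \<subseteq> (\<Union>J\<in>Js. Rec J ` Dom J)"
  proof
    fix Z assume "Z \<in> {Z \<in> carrier_mat n m. rank Z = r}"
    hence Z: "Z \<in> carrier_mat n m" "rank Z = r" by auto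
    obtain J where J: "J \<subseteq> {..<m}" "card J = r" "inj_on (col Z) J" "\<forall>j<m. col Z j \<in> span (col Z ` J)"
      using rank_span_cols[OF Z] by blast
    have finJ: "finite J" using J(1) finite_subset by blast
    have CJ: "col Z ` J \<subseteq> carrier_vec n" using J(1) Z by auto
    define co where "co j = (SOME a. a \<in> col Z ` J \<rightarrow> carrier class_ring \<and> lincomb a (col Z ` J) = col Z j)" for j
    have co: "lincomb (co j) (col Z ` J) = col Z j" if "j < m" for j
    proof -
      have "\<exists>a. a \<in> col Z ` J \<rightarrow> carrier class_ring \<and> lincomb a (col Z ` J) = col Z j"
        using finite_in_span[OF finite_imageI[OF finJ] _ J(4)[rule_format, OF that]] CJ by simp
      from someI_ex[OF this] show ?thesis unfolding co_def by blast
    qed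
    define a where "a = restrict (\<lambda>(i,j). Z $$ (i,j)) ({..<n} \<times> J)"
    define c where "c = restrict (\<lambda>j. restrict (\<lambda>k. co j (col Z k)) J) ({..<m} - J)"
    have "(a, c) \<in> Dom J" unfolding Dom_def a_def c_def by auto
    moreover have "Rec J (a, c) = Z"
    proof (rule eq_matI)
      fix i j assume ij: "i < dim_row Z" "j < dim_col Z"
      hence ij': "i < n" "j < m" using Z by auto
      show "Rec J (a,c) $$ (i,j) = Z $$ (i,j)"
      proof (cases "j \<in> J")
        case True then show ?thesis using ij' by (simp add: Rec_def a_def)
      next
        case False
        have "Z $$ (i,j) = col Z j $ i" using ij' Z by simp
        also have "\<dots> = lincomb (co j) (col Z ` J) $ i" using co ij' by simp
        also have "\<dots> = (\<Sum>x\<in>col Z ` J. co j x * x $ i)" by (rule lincomb_index[OF ij'(1) CJ])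
        also have "\<dots> = (\<Sum>k\<in>J. co j (col Z k) * col Z k $ i)" by (simp add: sum.reindex[OF J(3)])
        also have "\<dots> = (\<Sum>k\<in>J. c j k * a (i,k))"
          using J(1) ij' Z False by (intro sum.cong) (auto simp: c_def a_def)
        finally show ?thesis using False ij' by (simp add: Rec_def)
      qed
    qed (use Z in \<open>auto simp: Rec_def\<close>)
    ultimately show "Z \<in> (\<Union>J\<in>Js. Rec J ` Dom J)" using J unfolding Js_def by blast
  qed
  have finJs: "finite Js" unfolding Js_def by (rule finite_subset[of _ "Pow {..<m}"]) auto
  have cJs: "card Js \<le> 2^m"
  proof -
    have "card Js \<le> card (Pow {..<m::nat})" unfolding Js_def by (rule card_mono) auto
    thus ?thesis by (simp add: card_Pow)
  qed
  define D where "D = CARD('a)^(n*r) * (CARD('a)^r)^(m-r)"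
  have cD: "card (Dom J) = D" and fD: "finite (Dom J)" if "J \<in> Js" for J
  proof -
    have J: "J \<subseteq> {..<m}" "card J = r" "finite J" using that unfolding Js_def by (auto intro: finite_subset)
    have c1: "card ({..<m} - J) = m - r" using J by (simp add: card_Diff_subset)
    show "card (Dom J) = D" unfolding Dom_def D_def
      using J c1 by (simp add: card_cartesian_product card_PiE)
    show "finite (Dom J)" unfolding Dom_def using J by (auto intro!: finite_PiE)
  qed
  have "card {Z \<in> carrier_mat n m. rank Z = r} \<le> card (\<Union>J\<in>Js. Rec J ` Dom J)"
    by (rule card_mono[OF _ sub]) (use finJs fD in auto)
  also have "\<dots> \<le> (\<Sum>J\<in>Js. card (Rec J ` Dom J))" by (rule card_UN_le[OF finJs])
  also have "\<dots> \<le> (\<Sum>J\<in>Js. D)" by (rule sum_mono) (use cD fD card_image_le in metis)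
  also have "\<dots> = card Js * D" by simp
  also have "\<dots> \<le> 2^m * D" using cJs by simp
  finally show ?thesis unfolding D_def .
qed

lemma sum_set_nth: "distinct xs \<Longrightarrow> (\<Sum>x\<in>set xs. f x) = (\<Sum>k<length xs. f (xs!k))"
proof -
  assume d: "distinct xs"
  have "set xs = (!) xs ` {..<length xs}" by (auto simp: in_set_conv_nth)
  moreover have "inj_on ((!) xs) {..<length xs}" using d by (intro inj_on_nth) auto
  ultimately show ?thesis by (simp add: sum.reindex)
qed

lemma lower_count:
  assumes rn: "r \<le> n" and rm: "r \<le> m"
  shows "card (IL r) * (CARD('a)^r)^(m-r) \<le> card {Z \<in> carrier_mat n m. rank Z = r}"
proof -
  define D where "D = IL r \<times> ({r..<m} \<rightarrow>\<^sub>E ({..<r} \<rightarrow>\<^sub>E (UNIV::'a set)))"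
  define Rec where "Rec = (\<lambda>(xs :: 'a vec list, c :: nat \<Rightarrow> nat \<Rightarrow> 'a).
      mat n m (\<lambda>(i,j). if j < r then xs ! j $ i else (\<Sum>k<r. c j k * xs ! k $ i)))"
  define b where "b xs c j = (\<lambda>v. c j (the_inv_into {..<r} ((!) xs) v))" for xs :: "'a vec list" and c :: "nat \<Rightarrow> nat \<Rightarrow> 'a" and j
  have ILp: "length xs = r" "set xs \<subseteq> carrier_vec n" "distinct xs" "lin_indpt (set xs)" if "xs \<in> IL r" for xs
    using that unfolding IL_def by auto
  have bnth: "b xs c j (xs ! k) = c j k" if "xs \<in> IL r" "k < r" for xs c j k
  proof -
    have "inj_on ((!) xs) {..<r}" using ILp[OF that(1)] by (intro inj_on_nth) auto
    thus ?thesis unfolding b_def using that by (simp add: the_inv_into_f_f)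
  qed
  have lc_idx: "lincomb d (set xs) $ i = (\<Sum>k<r. d (xs!k) * xs ! k $ i)" if "xs \<in> IL r" "i < n" for xs d i
    using lincomb_index[OF that(2) ILp(2)[OF that(1)]] sum_set_nth[OF ILp(3)[OF that(1)]] ILp(1)[OF that(1)]
    by simp
  have colR: "col (Rec (xs,c)) j = lincomb (b xs c j) (set xs)" if xs: "xs \<in> IL r" and j: "r \<le> j" "j < m" for xs c j
  proof (rule eq_vecI)
    have "lincomb (b xs c j) (set xs) \<in> carrier_vec n"
      using ILp(2)[OF xs] by (intro lincomb_closed) auto
    thus "dim_vec (col (Rec (xs, c)) j) = dim_vec (lincomb (b xs c j) (set xs))" by (simp add: Rec_def)
    fix i assume "i < dim_vec (lincomb (b xs c j) (set xs))"
    hence i: "i < n" using \<open>lincomb (b xs c j) (set xs) \<in> carrier_vec n\<close> by simp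
    show "col (Rec (xs, c)) j $ i = lincomb (b xs c j) (set xs) $ i"
      using i j lc_idx[OF xs i] bnth[OF xs] by (simp add: Rec_def)
  qed
  have colL: "col (Rec (xs,c)) j = xs ! j" if xs: "xs \<in> IL r" and j: "j < r" for xs c j
  proof (rule eq_vecI)
    have "xs ! j \<in> carrier_vec n" using ILp[OF xs] j by auto
    thus "dim_vec (col (Rec (xs, c)) j) = dim_vec (xs ! j)" by (simp add: Rec_def)
    fix i assume "i < dim_vec (xs ! j)"
    thus "col (Rec (xs, c)) j $ i = xs ! j $ i" using j rm \<open>xs ! j \<in> carrier_vec n\<close> by (simp add: Rec_def)
  qed
  have RC: "Rec (xs, c) \<in> carrier_mat n m" for xs c by (simp add: Rec_def)
  have rank: "rank (Rec (xs, c)) = r" if xs: "xs \<in> IL r" for xs c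
  proof -
    define Z where "Z = Rec (xs, c)"
    have ZC: "Z \<in> carrier_mat n m" unfolding Z_def by (rule RC)
    note P = ILp[OF xs]
    have SinC: "set xs \<subseteq> set (cols Z)"
    proof
      fix v assume "v \<in> set xs"
      then obtain k where k: "k < r" "v = xs ! k" using P(1) by (auto simp: in_set_conv_nth)
      hence "v = col Z k" using colL[OF xs k(1)] Z_def by simp
      thus "v \<in> set (cols Z)" using set_cols_eq[OF ZC] k rm by auto
    qed
    have allsp: "v \<in> span (set xs)" if vin: "v \<in> set (cols Z)" for v
    proof -
      obtain j where j: "j < m" "v = col Z j" using vin set_cols_eq[OF ZC] by auto
      show ?thesis
      proof (cases "j < r")
        case True
        hence "v \<in> set xs" using colL[OF xs True] j P(1) Z_def by auto
        thus ?thesis using in_own_span[OF P(2)] by auto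
      next
        case False
        hence "v = lincomb (b xs c j) (set xs)" using colR[OF xs _ j(1)] j Z_def by simp
        thus ?thesis using finite_span[OF _ P(2)] by auto
      qed
    qed
    have max: "maximal (set xs) (\<lambda>T. T \<subseteq> set (cols Z) \<and> lin_indpt T)"
      unfolding maximal_def
    proof (intro conjI allI impI)
      show "set xs \<subseteq> set (cols Z)" by (rule SinC)
      show "lin_indpt (set xs)" by (rule P(4))
      fix T assume T: "set xs \<subseteq> T \<and> T \<subseteq> set (cols Z) \<and> lin_indpt T"
      show "T = set xs"
      proof (rule ccontr)
        assume "T \<noteq> set xs"
        then obtain t where t: "t \<in> T" "t \<notin> set xs" using T by auto
        have tc: "t \<in> set (cols Z)" using t T by auto
        have tC: "t \<in> carrier_vec n" using tc cols_dim[of Z] ZC by auto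
        have "lin_dep (set xs \<union> {t})"
          using lin_dep_iff_in_span[OF P(2) P(4) tC t(2)] allsp[OF tc] by simp
        moreover have "set xs \<union> {t} \<subseteq> T" using T t by auto
        ultimately have "lin_dep T" by (rule supset_ld_is_ld)
        thus False using T by simp
      qed
    qed
    show ?thesis using rank_card_indpt[OF ZC max] distinct_card[OF P(3)] P(1) Z_def by simp
  qed
  have inj: "inj_on Rec D"
  proof (rule inj_onI)
    fix x y assume x: "x \<in> D" and y: "y \<in> D" and eq: "Rec x = Rec y"
    obtain xs c where xd: "x = (xs, c)" by fastforce
    obtain ws d where yd: "y = (ws, d)" by fastforce
    have xs: "xs \<in> IL r" and ws: "ws \<in> IL r" using x y xd yd unfolding D_def by auto
    have cP: "c \<in> {r..<m} \<rightarrow>\<^sub>E ({..<r} \<rightarrow>\<^sub>E (UNIV::'a set))" and dP: "d \<in> {r..<m} \<rightarrow>\<^sub>E ({..<r} \<rightarrow>\<^sub>E (UNIV::'a set))"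
      using x y xd yd unfolding D_def by auto
    have vw: "xs = ws"
    proof (rule nth_equalityI)
      show "length xs = length ws" using ILp(1)[OF xs] ILp(1)[OF ws] by simp
      fix k assume "k < length xs"
      hence k: "k < r" using ILp(1)[OF xs] by simp
      have "xs ! k = col (Rec x) k" using colL[OF xs k] xd by simp
      also have "\<dots> = col (Rec y) k" using eq by simp
      also have "\<dots> = ws ! k" using colL[OF ws k] yd by simp
      finally show "xs ! k = ws ! k" .
    qed
    have "c j k = d j k" if j: "j \<in> {r..<m}" and k: "k < r" for j k
    proof -
      define e where "e = (\<lambda>v. b xs c j v - b xs d j v)"
      have "lincomb e (set xs) = 0\<^sub>v n"
      proof (rule eq_vecI)
        have "lincomb e (set xs) \<in> carrier_vec n" using ILp(2)[OF xs] by (intro lincomb_closed) auto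
        thus "dim_vec (lincomb e (set xs)) = dim_vec (0\<^sub>v n)" by simp
        fix i assume "i < dim_vec (0\<^sub>v n)"
        hence i: "i < n" by simp
        have "Rec x $$ (i,j) = Rec y $$ (i,j)" using eq by simp
        hence E: "(\<Sum>k<r. c j k * xs ! k $ i) = (\<Sum>k<r. d j k * xs ! k $ i)"
          using i j xd yd vw by (simp add: Rec_def)
        have "lincomb e (set xs) $ i = (\<Sum>k<r. (c j k - d j k) * xs ! k $ i)"
          unfolding lc_idx[OF xs i] e_def using bnth[OF xs] by (intro sum.cong) auto
        also have "\<dots> = 0" using E by (simp add: algebra_simps sum_subtractf)
        finally show "lincomb e (set xs) $ i = 0\<^sub>v n $ i" using i by simp
      qed
      hence "e \<in> set xs \<rightarrow> {zero class_ring}"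
        using not_lindepD[OF ILp(4)[OF xs] _ subset_refl] by auto
      moreover have "xs ! k \<in> set xs" using k ILp(1)[OF xs] by simp
      ultimately have "e (xs ! k) = 0" by auto
      thus ?thesis unfolding e_def using bnth[OF xs k] by simp
    qed
    hence cdE: "\<And>j k. j \<in> {r..<m} \<Longrightarrow> k < r \<Longrightarrow> c j k = d j k" .
    have "c = d"
    proof (rule ext)
      fix j show "c j = d j"
      proof (cases "j \<in> {r..<m}")
        case jT: True
        have cj: "c j \<in> {..<r} \<rightarrow>\<^sub>E (UNIV::'a set)" using cP jT by auto
        have dj: "d j \<in> {..<r} \<rightarrow>\<^sub>E (UNIV::'a set)" using dP jT by auto
        show ?thesis
        proof (rule ext)
          fix k show "c j k = d j k"
          proof (cases "k < r")
            case True thus ?thesis using cdE[OF jT] by simp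
          next
            case False thus ?thesis using PiE_arb[OF cj] PiE_arb[OF dj] by simp
          qed
        qed
      next
        case False thus ?thesis using PiE_arb[OF cP] PiE_arb[OF dP] by simp
      qed
    qed
    thus "x = y" using xd yd vw by simp
  qed
  have img: "Rec ` D \<subseteq> {Z \<in> carrier_mat n m. rank Z = r}"
    using RC rank unfolding D_def by auto
  have fin: "finite {Z \<in> carrier_mat n m. rank Z = r}"
    using fin_carrier_mat[of n m] by (rule finite_subset[rotated]) auto
  have "card D \<le> card {Z \<in> carrier_mat n m. rank Z = r}" by (rule card_inj_on_le[OF inj img fin])
  moreover have "card D = card (IL r) * (CARD('a)^r)^(m-r)"
    unfolding D_def by (simp add: card_cartesian_product card_PiE)
  ultimately show ?thesis by simp
qed

end



lemma K_bounds:
  fixes l m r :: nat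
  assumes rl: "r \<le> l" and rm: "r \<le> m"
  defines "K \<equiv> real (card (SNC_noise l m r :: 'a::{finite,field} mat set))" and "q \<equiv> real CARD('a)"
  shows "K > 0" "log q K \<le> real m + real r * (real l + real m - real r)"
    "log q K \<ge> real r * (real l + real m - real r) - real r"
proof -
  interpret V: fvec_space "TYPE('a)" l .
  have Nz: "SNC_noise l m r = {Z \<in> carrier_mat l m. vec_space.rank l Z = r}"
    unfolding SNC_noise_def ..
  define E where "E = r * (l + m - r)"
  have q2: "q \<ge> 2" unfolding q_def using card_field_ge2[where 'a='a] by simp
  have E1: "CARD('a)^(l*r) * (CARD('a)^r)^(m-r) = CARD('a)^E"
  proof -
    have "l*r + r*(m-r) = E" unfolding E_def using rm by (simp add: algebra_simps diff_mult_distrib2)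
    thus ?thesis by (simp add: power_mult[symmetric] power_add[symmetric])
  qed
  have upn: "card (SNC_noise l m r :: 'a mat set) \<le> 2^m * CARD('a)^E"
    using V.upper_count[of m r] unfolding Nz[symmetric] E1 .
  have up: "K \<le> 2^m * q^E"
  proof -
    have "real (card (SNC_noise l m r :: 'a mat set)) \<le> real (2^m * CARD('a)^E)"
      using upn by (simp only: of_nat_le_iff)
    thus ?thesis unfolding K_def q_def by simp
  qed
  have lowIL: "real (card (V.IL r)) \<ge> (q^l / 2)^r" using V.IL_lower[OF rl] unfolding q_def .
  have lown: "card (V.IL r) * (CARD('a)^r)^(m-r) \<le> card (SNC_noise l m r :: 'a mat set)"
    using V.lower_count[OF rl rm] unfolding Nz[symmetric] .
  have low0: "real (card (V.IL r)) * (q^r)^(m-r) \<le> K"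
  proof -
    have "real (card (V.IL r) * (CARD('a)^r)^(m-r)) \<le> real (card (SNC_noise l m r :: 'a mat set))"
      using lown by (simp only: of_nat_le_iff)
    thus ?thesis unfolding K_def q_def by simp
  qed
  have "(q^l / 2)^r * (q^r)^(m-r) \<le> real (card (V.IL r)) * (q^r)^(m-r)"
    using lowIL q2 by (intro mult_right_mono) auto
  also have "(q^l / 2)^r * (q^r)^(m-r) = q^E / 2^r"
  proof -
    have "real (CARD('a)^(l*r) * (CARD('a)^r)^(m-r)) = real (CARD('a)^E)" using E1 by simp
    hence "q^(l*r) * (q^r)^(m-r) = q^E" unfolding q_def by simp
    thus ?thesis by (simp add: power_divide power_mult[symmetric] mult.commute)
  qed
  finally have low: "q^E / 2^r \<le> K" using low0 by simp
  have qEpos: "q^E / 2^r > 0" using q2 by simp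
  show Kp: "K > 0" using low qEpos by linarith
  have l2: "log q 2 \<le> 1" using q2 by simp
  have l2p: "log q 2 \<ge> 0" using q2 by simp
  have "log q K \<le> log q (2^m * q^E)" using Kp up q2 by simp
  also have "\<dots> = real m * log q 2 + real E" using q2 by (simp add: log_mult log_nat_power)
  also have "\<dots> \<le> real m + real E" using l2 by (simp add: mult_left_le)
  finally show "log q K \<le> real m + real r * (real l + real m - real r)"
    unfolding E_def using rm by (simp add: of_nat_diff)
  have "log q (q^E / 2^r) \<le> log q K" using log_le_cancel_iff[of q "q^E / 2^r" K] q2 qEpos Kp low by simp
  moreover have "log q (q^E / 2^r) = real E - real r * log q 2" using q2 by (simp add: log_divide log_nat_power)
  moreover have "real r * log q 2 \<le> real r" using l2 by (simp add: mult_left_le)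
  ultimately show "log q K \<ge> real r * (real l + real m - real r) - real r"
    unfolding E_def using rm by (simp add: of_nat_diff)
qed




lemma cap_bound:
  fixes lam om :: real
  assumes "0 < lam" "lam < 1" "0 < om" "om \<le> 1" "om \<le> (1 - lam) / lam"
    and N: "N \<in> SNC_lengths lam om" "N \<ge> 1"
  shows "\<bar>SNC_cap_N TYPE('a::{finite,field}) lam om N - (1 - lam - om + lam * om ^ 2)\<bar> \<le> 1 / (lam * real N)"
proof -
  define T where "T = 1 - lam - om + lam * om ^ 2"
  obtain l k :: nat where lk: "real l = lam * real N" "real k = real l * om"
    using N(1) unfolding SNC_lengths_def by blast
  have fl: "nat \<lfloor>lam * real N\<rfloor> = l" unfolding lk(1)[symmetric] by simp
  have fr: "nat \<lfloor>real l * om\<rfloor> = k" unfolding lk(2)[symmetric] by simp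
  have "real l \<le> real N" using lk(1) assms by (simp add: mult_left_le_one_le)
  hence lN: "l \<le> N" by simp
  define m where "m = N - l"
  have mr: "real m = real N - real l" using lN by (simp add: m_def of_nat_diff)
  have Npos: "real N > 0" using N(2) by simp
  have lpos: "real l > 0" using lk(1) assms Npos by simp
  have "real k \<le> real l" using lk(2) assms lpos by (simp add: mult_left_le)
  hence kl: "k \<le> l" by simp
  have "om * lam \<le> 1 - lam" using assms by (simp add: le_divide_eq)
  hence "om * lam * real N \<le> (1 - lam) * real N" using Npos by (intro mult_right_mono) auto
  hence "real k \<le> real m" using lk mr by (simp add: algebra_simps)
  hence km: "k \<le> m" by simp
  define q where "q = real CARD('a)"
  define K where "K = real (card (SNC_noise l m k :: 'a mat set))"
  note KB = K_bounds[OF kl km, where 'a='a, folded K_def q_def]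
  have Kn: "card (SNC_noise l m k :: 'a mat set) > 0" using KB(1) unfolding K_def by simp
  have cap: "SNC_cap_N TYPE('a) lam om N = (1 / (real N * real l)) * (real (l*m) - log q K)"
    unfolding SNC_cap_N_def Let_def fl fr m_def[symmetric] SUP_MI[OF Kn] q_def K_def ..
  have ident: "real (l*m) - real k * (real l + real m - real k) = real N * real l * T"
    unfolding T_def of_nat_mult mr lk(2) lk(1) by (simp add: algebra_simps power2_eq_square)
  have "SNC_cap_N TYPE('a) lam om N - T = (real k * (real l + real m - real k) - log q K) / (real N * real l)"
    unfolding cap using ident Npos lpos by (simp add: field_simps)
  also have "\<bar>\<dots>\<bar> \<le> real N / (real N * real l)"
  proof -
    have "\<bar>real k * (real l + real m - real k) - log q K\<bar> \<le> real N"
      using KB(2) KB(3) kl km lN mr by (simp add: abs_le_iff) 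
    hence "\<bar>real k * (real l + real m - real k) - log q K\<bar> / (real N * real l) \<le> real N / (real N * real l)"
      by (rule divide_right_mono) (use Npos lpos in simp)
    moreover have "\<bar>(real k * (real l + real m - real k) - log q K) / (real N * real l)\<bar>
        = \<bar>real k * (real l + real m - real k) - log q K\<bar> / (real N * real l)"
      using Npos lpos by (simp add: abs_divide)
    ultimately show ?thesis by simp
  qed
  also have "real N / (real N * real l) = 1 / (lam * real N)" using Npos lk(1) by simp
  finally show ?thesis unfolding T_def .
qed

theorem proposition1:
  fixes lam om :: real
  assumes "0 < lam" "lam < 1" "0 < om" "om \<le> 1" "om \<le> (1 - lam) / lam"
    and "lam \<in> \<rat>" "om \<in> \<rat>"
  shows "((\<lambda>N. SNC_cap_N TYPE('a::{finite,field}) lam om N)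
           \<longlongrightarrow> 1 - lam - om + lam * om ^ 2) (inf at_top (principal (SNC_lengths lam om)))"
proof (rule tendstoI)
  fix e :: real assume e: "e > 0"
  obtain N0 :: nat where N0: "1 / (lam * e) < real N0" using reals_Archimedean2 by blast
  have "\<forall>\<^sub>F N in at_top. N \<in> SNC_lengths lam om \<longrightarrow>
      dist (SNC_cap_N TYPE('a) lam om N) (1 - lam - om + lam * om ^ 2) < e"
    using eventually_ge_at_top[of "max N0 1"]
  proof eventually_elim
    case (elim N)
    show ?case
    proof
      assume S: "N \<in> SNC_lengths lam om"
      have N1: "N \<ge> 1" "N \<ge> N0" using elim by auto
      have B: "\<bar>SNC_cap_N TYPE('a) lam om N - (1 - lam - om + lam * om ^ 2)\<bar> \<le> 1 / (lam * real N)"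
        by (rule cap_bound[OF assms(1-5) S N1(1)])
      have "1 / (lam * e) < real N" using N0 N1(2) by linarith
      hence "1 < lam * e * real N" using assms(1) e by (simp add: divide_less_eq mult.commute mult.left_commute)
      hence "1 / (lam * real N) < e" using assms(1) e N1 by (simp add: divide_less_eq algebra_simps)
      thus "dist (SNC_cap_N TYPE('a) lam om N) (1 - lam - om + lam * om ^ 2) < e"
        using B by (simp add: dist_real_def)
    qed
  qed
  thus "\<forall>\<^sub>F N in inf at_top (principal (SNC_lengths lam om)).
      dist (SNC_cap_N TYPE('a) lam om N) (1 - lam - om + lam * om ^ 2) < e"
    by (simp add: eventually_inf_principal)
qed


end
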